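(* Let $\zeta\in\mathbb{C}^*$. The set $\{\operatorname{Tr} M : M\in G_q(\zeta)\}$ is finite if and only if $\zeta$ is a primitive $n$-th root of unity for some $n\in\{2,3,4,5,6\}$.
   Context: Let $q$ be a formal parameter and let $R_q=\begin{pmatrix} q & 1\\ 0 & 1\end{pmatrix}$, $S_q=\begin{pmatrix} 0 & -q^{-1}\\ 1 & 0\end{pmatrix}\in \mathrm{GL}(2,\mathbb{Z}[q,q^{-1}])$. Let $G_q=\langle R_q,S_q\rangle$ be the group they generate. For $\zeta\in\mathbb{C}^*$, set $G_q(\zeta)=\{M_q|_{q=\zeta} : M_q\in G_q\}\subset \mathrm{GL}(2,\mathbb{C})$. *)

theory Defs
  imports "HOL-Analysis.Analysis"
begin

definition mat2 :: "complex \<Rightarrow> complex \<Rightarrow> complex \<Rightarrow> complex \<Rightarrow> complex^2^2" where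
  "mat2 a b c d = vector [vector [a, b], vector [c, d]]"

text \<open>The generators R_q, S_q and their inverses, as functions of the parameter q
  (entries are Laurent polynomials in q, represented by their values on nonzero q).\<close>
definition Rq :: "complex \<Rightarrow> complex^2^2" where
  "Rq q = mat2 q 1 0 1"
definition Rq_inv :: "complex \<Rightarrow> complex^2^2" where
  "Rq_inv q = mat2 (inverse q) (- inverse q) 0 1"
definition Sq :: "complex \<Rightarrow> complex^2^2" where
  "Sq q = mat2 0 (- inverse q) 1 0"
definition Sq_inv :: "complex \<Rightarrow> complex^2^2" where
  "Sq_inv q = mat2 0 1 (- q) 0"

inductive_set Gq :: "(complex \<Rightarrow> complex^2^2) set" where
  one: "(\<lambda>q. mat 1) \<in> Gq"
| R: "M \<in> Gq \<Longrightarrow> (\<lambda>q. M q ** Rq q) \<in> Gq"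
| Rinv: "M \<in> Gq \<Longrightarrow> (\<lambda>q. M q ** Rq_inv q) \<in> Gq"
| S: "M \<in> Gq \<Longrightarrow> (\<lambda>q. M q ** Sq q) \<in> Gq"
| Sinv: "M \<in> Gq \<Longrightarrow> (\<lambda>q. M q ** Sq_inv q) \<in> Gq"

definition Gq_at :: "complex \<Rightarrow> (complex^2^2) set" where
  "Gq_at z = (\<lambda>M. M z) ` Gq"

definition primitive_root_of_unity :: "nat \<Rightarrow> complex \<Rightarrow> bool" where
  "primitive_root_of_unity n z \<longleftrightarrow> n \<ge> 1 \<and> z ^ n = 1 \<and> (\<forall>k. 1 \<le> k \<and> k < n \<longrightarrow> z ^ k \<noteq> 1)"

lemma Rq_inv_ok: "q \<noteq> 0 \<Longrightarrow> Rq q ** Rq_inv q = mat 1"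
  unfolding Rq_def Rq_inv_def mat2_def
  by (simp add: matrix_matrix_mult_def vec_eq_iff forall_2 sum_2 mat_def vector_def field_simps)

lemma Sq_inv_ok: "q \<noteq> 0 \<Longrightarrow> Sq q ** Sq_inv q = mat 1"
  unfolding Sq_def Sq_inv_def mat2_def
  by (simp add: matrix_matrix_mult_def vec_eq_iff forall_2 sum_2 mat_def vector_def field_simps)

end

theory Submission
  imports Defs
begin

type_synonym m2 = "complex^2^2"

lemma mat2_nth [simp]:
  "mat2 a b c d $ 1 $ 1 = a" "mat2 a b c d $ 1 $ 2 = b"
  "mat2 a b c d $ 2 $ 1 = c" "mat2 a b c d $ 2 $ 2 = d"
  by (simp_all add: mat2_def)

lemma mat2_eta: "(X::m2) = mat2 (X$1$1) (X$1$2) (X$2$1) (X$2$2)"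
  by (simp add: vec_eq_iff forall_2)

lemma mat2_eq_iff: "mat2 a b c d = mat2 a' b' c' d' \<longleftrightarrow> a = a' \<and> b = b' \<and> c = c' \<and> d = d'"
  by (metis mat2_nth)

lemma mat2_mult [simp]: "mat2 a b c d ** mat2 e f g h = mat2 (a*e+b*g) (a*f+b*h) (c*e+d*g) (c*f+d*h)"
  by (simp add: matrix_matrix_mult_def vec_eq_iff forall_2 sum_2)

lemma mat2_one: "(mat 1 :: m2) = mat2 1 0 0 1"
  by (simp add: vec_eq_iff forall_2 mat_def)

lemma trace_mat2 [simp]: "trace (mat2 a b c d) = a + d"
  by (simp add: trace_def sum_2)

lemma det_mat2 [simp]: "det (mat2 a b c d) = a * d - b * c"
  by (simp add: det_2)

abbreviation G where "G z \<equiv> Gq_at z"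

lemma gens:
  "Rq z = mat2 z 1 0 1" "Rq_inv z = mat2 (1/z) (-1/z) 0 1"
  "Sq z = mat2 0 (-1/z) 1 0" "Sq_inv z = mat2 0 1 (-z) 0"
  by (simp_all add: Rq_def Rq_inv_def Sq_def Sq_inv_def divide_inverse)

lemma G_one: "mat 1 \<in> G z"
  unfolding Gq_at_def using Gq.one by force

lemma G_R: "X \<in> G z \<Longrightarrow> X ** Rq z \<in> G z"
  and G_Rinv: "X \<in> G z \<Longrightarrow> X ** Rq_inv z \<in> G z"
  and G_S: "X \<in> G z \<Longrightarrow> X ** Sq z \<in> G z"
  and G_Sinv: "X \<in> G z \<Longrightarrow> X ** Sq_inv z \<in> G z"
  unfolding Gq_at_def
  by (auto intro!: image_eqI[where x="\<lambda>q. _ q ** _ q"] Gq.intros)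

lemma G_gens: "Rq z \<in> G z" "Rq_inv z \<in> G z" "Sq z \<in> G z" "Sq_inv z \<in> G z"
  using G_R[OF G_one] G_Rinv[OF G_one] G_S[OF G_one] G_Sinv[OF G_one]
  by (simp_all add: matrix_mul_lid)

lemma G_mult_aux: "M \<in> Gq \<Longrightarrow> X \<in> G z \<Longrightarrow> X ** M z \<in> G z"
proof (induction M rule: Gq.induct)
  case one then show ?case by (simp add: matrix_mul_rid)
next
  case (R M) then show ?case using G_R by (metis matrix_mul_assoc)
next
  case (Rinv M) then show ?case using G_Rinv by (metis matrix_mul_assoc)
next
  case (S M) then show ?case using G_S by (metis matrix_mul_assoc)
next
  case (Sinv M) then show ?case using G_Sinv by (metis matrix_mul_assoc)
qed

lemma G_mult: "X \<in> G z \<Longrightarrow> Y \<in> G z \<Longrightarrow> X ** Y \<in> G z"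
  using G_mult_aux unfolding Gq_at_def by blast

definition inv2 :: "m2 \<Rightarrow> m2" where
  "inv2 X = mat2 (X$2$2 * inverse (det X)) (-X$1$2 * inverse (det X)) (-X$2$1 * inverse (det X)) (X$1$1 * inverse (det X))"

lemma inv2_mat2: "inv2 (mat2 a b c d) = mat2 (d * inverse (a*d-b*c)) (-b * inverse (a*d-b*c)) (-c * inverse (a*d-b*c)) (a * inverse (a*d-b*c))"
  by (simp add: inv2_def)

lemma inv2_right: assumes "det X \<noteq> 0" shows "X ** inv2 X = mat 1"
proof -
  obtain a b c d where X: "X = mat2 a b c d" using mat2_eta by blast
  define e where "e = inverse (a*d-b*c)"
  have e: "(a*d-b*c) * e = 1" using assms unfolding X e_def by simp
  show ?thesis unfolding X inv2_mat2 mat2_mult mat2_one mat2_eq_iff e_def[symmetric]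
    apply (intro conjI) using e by algebra+
qed

lemma inv2_left: assumes "det X \<noteq> 0" shows "inv2 X ** X = mat 1"
proof -
  obtain a b c d where X: "X = mat2 a b c d" using mat2_eta by blast
  define e where "e = inverse (a*d-b*c)"
  have e: "(a*d-b*c) * e = 1" using assms unfolding X e_def by simp
  show ?thesis unfolding X inv2_mat2 mat2_mult mat2_one mat2_eq_iff e_def[symmetric]
    apply (intro conjI) using e by algebra+
qed

lemma gen_invs: assumes "z \<noteq> 0"
  shows "Rq_inv z ** Rq z = mat 1" "Rq z ** Rq_inv z = mat 1"
   "Sq_inv z ** Sq z = mat 1" "Sq z ** Sq_inv z = mat 1"
  using assms by (simp_all add: gens mat2_one mat2_eq_iff field_simps)

lemma G_inv_aux: "M \<in> Gq \<Longrightarrow> z \<noteq> 0 \<Longrightarrow> \<exists>Y\<in>G z. Y ** M z = mat 1"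
proof (induction M rule: Gq.induct)
  case one then show ?case using G_one by (auto simp: matrix_mul_rid)
next
  case (R M)
  then obtain Y where Y: "Y \<in> G z" "Y ** M z = mat 1" by auto
  have "(Rq_inv z ** Y) ** (M z ** Rq z) = Rq_inv z ** (Y ** M z) ** Rq z"
    by (simp add: matrix_mul_assoc)
  also have "\<dots> = mat 1" using Y gen_invs R by (simp add: matrix_mul_rid)
  finally show ?case using G_mult[OF G_gens(2) Y(1)] by blast
next
  case (Rinv M)
  then obtain Y where Y: "Y \<in> G z" "Y ** M z = mat 1" by auto
  have "(Rq z ** Y) ** (M z ** Rq_inv z) = Rq z ** (Y ** M z) ** Rq_inv z"
    by (simp add: matrix_mul_assoc)
  also have "\<dots> = mat 1" using Y gen_invs Rinv by (simp add: matrix_mul_rid)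
  finally show ?case using G_mult[OF G_gens(1) Y(1)] by blast
next
  case (S M)
  then obtain Y where Y: "Y \<in> G z" "Y ** M z = mat 1" by auto
  have "(Sq_inv z ** Y) ** (M z ** Sq z) = Sq_inv z ** (Y ** M z) ** Sq z"
    by (simp add: matrix_mul_assoc)
  also have "\<dots> = mat 1" using Y gen_invs S by (simp add: matrix_mul_rid)
  finally show ?case using G_mult[OF G_gens(4) Y(1)] by blast
next
  case (Sinv M)
  then obtain Y where Y: "Y \<in> G z" "Y ** M z = mat 1" by auto
  have "(Sq z ** Y) ** (M z ** Sq_inv z) = Sq z ** (Y ** M z) ** Sq_inv z"
    by (simp add: matrix_mul_assoc)
  also have "\<dots> = mat 1" using Y gen_invs Sinv by (simp add: matrix_mul_rid)
  finally show ?case using G_mult[OF G_gens(3) Y(1)] by blast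
qed

lemma G_inv: assumes "X \<in> G z" "z \<noteq> 0" shows "det X \<noteq> 0" "inv2 X \<in> G z"
proof -
  obtain M where M: "M \<in> Gq" "X = M z" using assms unfolding Gq_at_def by auto
  obtain Y where Y: "Y \<in> G z" "Y ** X = mat 1" using G_inv_aux[OF M(1) assms(2)] M by auto
  have "det Y * det X = 1" using Y(2) det_mul[of Y X] by simp
  then show d: "det X \<noteq> 0" by auto
  have "inv2 X = (Y ** X) ** inv2 X" using Y by (simp add: matrix_mul_lid)
  also have "\<dots> = Y" using inv2_right[OF d] by (metis matrix_mul_assoc matrix_mul_rid)
  finally show "inv2 X \<in> G z" using Y by simp
qed

lemma G_det_aux: "M \<in> Gq \<Longrightarrow> cmod z = 1 \<Longrightarrow> cmod (det (M z)) = 1"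
proof (induction M rule: Gq.induct)
  case one then show ?case by (simp add: mat2_one)
next
  case (R M) then show ?case by (simp add: det_mul gens norm_mult)
next
  case (Rinv M) then show ?case by (simp add: det_mul gens norm_mult norm_divide)
next
  case (S M) then show ?case by (simp add: det_mul gens norm_mult norm_divide)
next
  case (Sinv M) then show ?case by (simp add: det_mul gens norm_mult)
qed

lemma G_det: "X \<in> G z \<Longrightarrow> cmod z = 1 \<Longrightarrow> cmod (det X) = 1"
  using G_det_aux unfolding Gq_at_def by blast

primrec mpow :: "m2 \<Rightarrow> nat \<Rightarrow> m2" where
  "mpow X 0 = mat 1"
| "mpow X (Suc k) = mpow X k ** X"

lemma G_mpow: "X \<in> G z \<Longrightarrow> mpow X k \<in> G z"
  by (induction k) (auto intro: G_mult G_one)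

definition comm :: "m2 \<Rightarrow> m2 \<Rightarrow> m2" where
  "comm A B = A ** B ** inv2 A ** inv2 B"

lemma G_comm: "A \<in> G z \<Longrightarrow> B \<in> G z \<Longrightarrow> z \<noteq> 0 \<Longrightarrow> comm A B \<in> G z"
  unfolding comm_def by (intro G_mult G_inv) auto

lemma det_inv2: "det X \<noteq> 0 \<Longrightarrow> det (inv2 X) = inverse (det X)"
  using inv2_right[of X] det_mul[of X "inv2 X"] by (simp add: field_simps)

lemma det_comm: "det A \<noteq> 0 \<Longrightarrow> det B \<noteq> 0 \<Longrightarrow> det (comm A B) = 1"
  unfolding comm_def by (simp add: det_mul det_inv2 field_simps)

lemma trace_CH: fixes P X :: m2 shows "trace (P ** X ** X) = trace X * trace (P ** X) - det X * trace P"
proof -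
  obtain a b c d where X: "X = mat2 a b c d" using mat2_eta by blast
  obtain p q r w where P: "P = mat2 p q r w" using mat2_eta by blast
  show ?thesis unfolding X P by (simp add: algebra_simps)
qed

lemma trace_mpow:
  fixes X :: m2
  assumes "l1 + l2 = trace X" "l1 * l2 = det X"
  shows "trace (mpow X k) = l1^k + l2^k"
proof (induction k rule: less_induct)
  case (less k)
  show ?case
  proof (cases k)
    case 0 then show ?thesis by (simp add: mat2_one)
  next
    case (Suc j) note j = this
    show ?thesis
    proof (cases j)
      case 0 then show ?thesis using j assms by (simp add: matrix_mul_lid)
    next
      case (Suc i)
      have "trace (mpow X k) = trace (mpow X i ** X ** X)" using j Suc by simp
      also have "\<dots> = trace X * trace (mpow X i ** X) - det X * trace (mpow X i)" by (rule trace_CH)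
      also have "\<dots> = (l1+l2) * (l1^(Suc i) + l2^(Suc i)) - l1*l2*(l1^i+l2^i)"
        using less[of i] less[of "Suc i"] j Suc assms by simp
      also have "\<dots> = l1^k + l2^k" using j Suc by (simp add: algebra_simps)
      finally show ?thesis .
    qed
  qed
qed

lemma fricke:
  fixes A B :: m2
  assumes "det A \<noteq> 0" "det B \<noteq> 0"
  shows "trace (comm A B) * (det A * det B) =
    trace A ^ 2 * det B + trace B ^ 2 * det A + trace (A ** B) ^ 2
    - trace A * trace B * trace (A ** B) - 2 * det A * det B"
proof -
  obtain a b c d where A: "A = mat2 a b c d" using mat2_eta by blast
  obtain p q r w where B: "B = mat2 p q r w" using mat2_eta by blast
  define e where "e = inverse (a*d-b*c)"
  define f where "f = inverse (p*w-q*r)"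
  have e: "(a*d-b*c) * e = 1" using assms unfolding A e_def by simp
  have f: "(p*w-q*r) * f = 1" using assms unfolding B f_def by simp
  show ?thesis unfolding A B comm_def inv2_mat2 mat2_mult trace_mat2 det_mat2 e_def[symmetric] f_def[symmetric]
    using e f by algebra
qed

definition app2 :: "m2 \<Rightarrow> complex \<times> complex \<Rightarrow> complex \<times> complex" where
  "app2 X v = (X$1$1 * fst v + X$1$2 * snd v, X$2$1 * fst v + X$2$2 * snd v)"

lemma app2_mult: fixes X Y :: m2 shows "app2 (X ** Y) v = app2 X (app2 Y v)"
proof -
  obtain a b c d where X: "X = mat2 a b c d" using mat2_eta by blast
  obtain p q r s where Y: "Y = mat2 p q r s" using mat2_eta by blast
  show ?thesis unfolding X Y app2_def by (simp add: algebra_simps)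
qed

lemma app2_one: "app2 (mat 1) v = v"
  by (simp add: app2_def mat2_one)

lemma eigen_exists:
  fixes X :: m2
  assumes "l^2 - trace X * l + det X = 0"
  shows "\<exists>v. v \<noteq> (0,0) \<and> app2 X v = (l * fst v, l * snd v)"
proof -
  obtain a b c d where X: "X = mat2 a b c d" using mat2_eta by blast
  have e: "l^2 - (a+d)*l + (a*d-b*c) = 0" using assms X by simp
  show ?thesis
  proof (cases "b = 0")
    case False
    show ?thesis
      apply (rule exI[of _ "(b, l - a)"]) using False e unfolding X app2_def
      by (auto simp: algebra_simps power2_eq_square)
  next
    case True note b = this
    show ?thesis
    proof (cases "c = 0")
      case False
      show ?thesis
        apply (rule exI[of _ "(l - d, c)"]) using False b e unfolding X app2_def
        by (auto simp: algebra_simps power2_eq_square)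
    next
      case True
      have "(l - a) * (l - d) = 0" using e b True by (simp add: algebra_simps power2_eq_square)
      then have "l = a \<or> l = d" by auto
      then show ?thesis
      proof
        assume "l = a" then show ?thesis using b True
          by (intro exI[of _ "(1,0)"]) (auto simp: X app2_def)
      next
        assume "l = d" then show ?thesis using b True
          by (intro exI[of _ "(0,1)"]) (auto simp: X app2_def)
      qed
    qed
  qed
qed

lemma eigen_root:
  fixes X :: m2
  assumes "v \<noteq> (0,0)" "app2 X v = (l * fst v, l * snd v)"
  shows "l^2 - trace X * l + det X = 0"
proof -
  obtain a b c d where X: "X = mat2 a b c d" using mat2_eta by blast
  obtain x y where v: "v = (x,y)" by fastforce
  have 1: "(a - l) * x + b * y = 0" and 2: "c * x + (d - l) * y = 0"
    using assms(2) unfolding X v app2_def by (auto simp: algebra_simps)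
  have "((a-l)*(d-l) - b*c) * x = 0" using 1 2 by algebra
  moreover have "((a-l)*(d-l) - b*c) * y = 0" using 1 2 by algebra
  ultimately have "(a-l)*(d-l) - b*c = 0" using assms(1) v by auto
  then show ?thesis unfolding X by (simp add: algebra_simps power2_eq_square)
qed

lemma roots_exist: "\<exists>l1 l2. l1 + l2 = t \<and> l1 * l2 = (d::complex)"
proof -
  define w where "w = csqrt (t^2 - 4*d)"
  have "w^2 = t^2 - 4*d" unfolding w_def by simp
  then show ?thesis
    by (intro exI[of _ "(t+w)/2"] exI[of _ "(t-w)/2"]) (auto simp: field_simps power2_eq_square)
qed

lemma unit_inv: "cmod l = 1 \<Longrightarrow> inverse l = cnj l"
proof -
  assume "cmod l = 1"
  then have "l * cnj l = 1" using complex_norm_square[of l] by simp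
  then show ?thesis by (metis inverse_unique)
qed

lemma real_sq: assumes "t^2 = complex_of_real s" "0 \<le> s"
  shows "t = of_real (Re t)" "s = (Re t)^2"
proof -
  have im: "2 * Re t * Im t = 0" "Re t ^2 - Im t ^2 = s"
    using assms(1) unfolding complex_eq_iff power2_eq_square by auto
  have "Im t = 0"
  proof (rule ccontr)
    assume "Im t \<noteq> 0"
    then have "Re t = 0" using im by auto
    then have "- (Im t^2) = s" using im by simp
    moreover have "Im t ^2 > 0" using \<open>Im t \<noteq> 0\<close> by simp
    ultimately show False using assms(2) by linarith
  qed
  then show "t = of_real (Re t)" by (simp add: complex_eq_iff)
  show "s = (Re t)^2" using im \<open>Im t = 0\<close> by simp
qed

lemma fin_bounded: "finite (S::complex set) \<Longrightarrow> \<exists>Mb. \<forall>t\<in>S. cmod t \<le> Mb"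
  using finite_imp_bounded bounded_iff by blast

lemma sigma_real:
  assumes fin: "finite (trace ` G z)" and z1: "cmod z = 1" and X: "X \<in> G z"
  shows "\<exists>s. trace X ^ 2 / det X = of_real s \<and> 0 \<le> s \<and> s \<le> 4"
proof -
  have d1: "cmod (det X) = 1" using G_det X z1 by blast
  obtain Mb where Mb: "\<forall>t\<in>trace ` G z. cmod t \<le> Mb" using fin_bounded[OF fin] by blast
  obtain l1 l2 where l: "l1 + l2 = trace X" "l1 * l2 = det X" using roots_exist by blast
  have pw: "cmod (l1^k + l2^k) \<le> Mb" for k
    using Mb G_mpow[OF X, of k] trace_mpow[OF l, of k] by auto
  have pw2: "cmod (l2^k + l1^k) \<le> Mb" for k using pw[of k] by (simp add: add.commute)
  have n12: "cmod l1 * cmod l2 = 1" using l d1 by (metis norm_mult)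
  have key: "cmod a \<le> 1" if ab: "cmod a * cmod b = 1" and bd: "\<forall>k. cmod (a^k + b^k) \<le> Mb" for a b :: complex
  proof (rule ccontr)
    assume "\<not> cmod a \<le> 1"
    then have a1: "cmod a > 1" by simp
    then have "cmod b < 1" using ab
      by (metis mult_cancel_left1 mult_less_cancel_left_pos norm_ge_zero order_le_less_trans zero_less_one less_le)
    obtain k where k: "Mb + 1 < cmod a ^ k" using real_arch_pow[OF a1] by blast
    have "cmod (b^k) \<le> 1" using \<open>cmod b < 1\<close> by (simp add: norm_power power_le_one)
    moreover have "cmod (a^k) - cmod (b^k) \<le> cmod (a^k + b^k)" by (metis norm_diff_ineq)
    ultimately have "cmod a ^ k - 1 \<le> Mb" using bd by (simp add: norm_power) (smt (verit))
    then show False using k by linarith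
  qed
  have le1: "cmod l1 \<le> 1" using key[OF n12] pw by blast
  have le2: "cmod l2 \<le> 1" using key[of l2 l1] n12 pw2 by (simp add: mult.commute)
  have e1: "cmod l1 = 1"
  proof (rule ccontr)
    assume "cmod l1 \<noteq> 1"
    then have "cmod l1 < 1" using le1 by simp
    moreover have "cmod l1 * cmod l2 \<le> cmod l1" using le2 by (simp add: mult_left_le)
    ultimately show False using n12 by simp
  qed
  have e2: "cmod l2 = 1" using n12 e1 by simp
  have nz: "l1 \<noteq> 0" "l2 \<noteq> 0" using e1 e2 by auto
  have "trace X ^ 2 / det X = (l1 + l2)^2 / (l1 * l2)" by (simp add: l[symmetric])
  also have "\<dots> = (l1 + l2) * (inverse l1 + inverse l2)"
    using nz by (simp add: field_simps power2_eq_square)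
  also have "\<dots> = (l1 + l2) * cnj (l1 + l2)" using unit_inv[OF e1] unit_inv[OF e2] by simp
  also have "\<dots> = of_real ((cmod (l1 + l2))^2)" using complex_norm_square by simp
  finally have "trace X ^ 2 / det X = of_real ((cmod (l1 + l2))^2)" .
  moreover have "cmod (l1 + l2) \<le> 2" using e1 e2 norm_triangle_ineq[of l1 l2] by simp
  then have "(cmod (l1 + l2))^2 \<le> 4"
    by (metis norm_ge_zero power_mono numeral_Bit0_eq_double numeral_times_numeral power2_eq_square semiring_norm(12) semiring_norm(13) mult_2)
  ultimately show ?thesis by (intro exI[of _ "(cmod (l1 + l2))^2"]) auto
qed

lemma zass_real:
  fixes p q r rho k :: real
  assumes "0 \<le> p" "p \<le> 4" "0 \<le> q" "q \<le> 4" "0 \<le> r" "rho^2 = p*q*r" "k = p + q + r - rho - 2"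
  shows "2 - k \<le> (4-p)*(4-q)/4"
proof -
  define a where "a = sqrt p"
  define b where "b = sqrt q"
  define c where "c = sqrt r"
  have a: "a^2 = p" "a \<ge> 0" using assms a_def by auto
  have b: "b^2 = q" "b \<ge> 0" using assms b_def by auto
  have c: "c^2 = r" "c \<ge> 0" using assms c_def by auto
  have "rho \<le> \<bar>rho\<bar>" by simp
  also have "\<bar>rho\<bar> = sqrt (rho^2)" by simp
  also have "\<dots> = a * b * c" using assms(6) by (simp add: a_def b_def c_def real_sqrt_mult)
  finally have rh: "rho \<le> a*b*c" .
  have eq: "(4-p)*(4-q)/4 - (2-k) = (c - a*b/2)^2 + (a*b*c - rho)"
    unfolding assms(7) a(1)[symmetric] b(1)[symmetric] c(1)[symmetric] by (simp add: power2_eq_square field_simps)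
  have "0 \<le> (c - a*b/2)^2" by simp
  then show ?thesis using rh eq by linarith
qed

definition sig :: "m2 \<Rightarrow> complex" where "sig X = trace X ^ 2 / det X"

lemma comm_bound:
  assumes fin: "finite (trace ` G z)" and z1: "cmod z = 1" and A: "A \<in> G z" and B: "B \<in> G z"
  shows "trace (comm A B) = of_real (Re (trace (comm A B)))"
    "2 - Re (trace (comm A B)) \<le> (4 - Re (sig A)) * (4 - Re (sig B)) / 4"
proof -
  have z0: "z \<noteq> 0" using z1 by auto
  have dA: "det A \<noteq> 0" and dB: "det B \<noteq> 0" using G_inv z0 A B by auto
  obtain sA where sA: "sig A = of_real sA" "0 \<le> sA" "sA \<le> 4" using sigma_real[OF fin z1 A] sig_def by auto
  obtain sB where sB: "sig B = of_real sB" "0 \<le> sB" "sB \<le> 4" using sigma_real[OF fin z1 B] sig_def by auto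
  obtain sC where sC: "sig (A ** B) = of_real sC" "0 \<le> sC" "sC \<le> 4"
    using sigma_real[OF fin z1 G_mult[OF A B]] sig_def by auto
  define P where "P = trace A * trace B * trace (A ** B) / (det A * det B)"
  have "P^2 = sig A * sig B * sig (A ** B)"
    unfolding P_def sig_def using dA dB by (simp add: det_mul field_simps power2_eq_square)
  then have P2: "P^2 = of_real (sA * sB * sC)" using sA sB sC by simp
  have Pr: "P = of_real (Re P)" "sA * sB * sC = (Re P)^2" using real_sq[OF P2] sA sB sC by auto
  have "trace (comm A B) = (trace A ^ 2 * det B + trace B ^ 2 * det A + trace (A ** B) ^ 2
    - trace A * trace B * trace (A ** B) - 2 * det A * det B) / (det A * det B)"
    using fricke[OF dA dB] dA dB by (simp add: eq_divide_eq)
  also have "\<dots> = sig A + sig B + sig (A ** B) - P - 2"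
    using dA dB unfolding sig_def P_def by (simp add: det_mul field_simps)
  also have "\<dots> = of_real (sA + sB + sC - Re P - 2)" using sA sB sC Pr by simp
  finally have tr: "trace (comm A B) = of_real (sA + sB + sC - Re P - 2)" .
  then show "trace (comm A B) = of_real (Re (trace (comm A B)))" by simp
  have "2 - (sA + sB + sC - Re P - 2) \<le> (4 - sA) * (4 - sB) / 4"
    by (rule zass_real[where r = sC]) (use sA sB sC Pr in auto)
  then show "2 - Re (trace (comm A B)) \<le> (4 - Re (sig A)) * (4 - Re (sig B)) / 4"
    using tr sA sB by simp
qed

lemma inj_infinite_sub:
  fixes f :: "nat \<Rightarrow> complex"
  assumes "inj f" "\<And>j. f j \<in> T" shows "infinite T"
proof
  assume "finite T"
  then have "finite (range f)" using assms(2) by (meson finite_subset image_subsetI)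
  then show False using finite_imageD[of f UNIV] assms(1) by auto
qed

lemma unipotent_infinite:
  assumes z0: "z \<noteq> 0" and h6: "z^2 - z + 1 \<noteq> 0" and CG: "C \<in> G z"
    and dC: "det C = 1" and tC: "trace C = 2" and C1: "C \<noteq> mat 1"
  shows "infinite (trace ` G z)"
proof -
  obtain a b c d where C: "C = mat2 a b c d" using mat2_eta by blast
  have ad: "a + d = 2" "a*d - b*c = 1" using dC tC C by auto
  have pw: "mpow C j = mat2 (1 + of_nat j*(a-1)) (of_nat j * b) (of_nat j * c) (1 + of_nat j*(d-1))" for j
  proof (induction j)
    case 0 then show ?case by (simp add: mat2_one)
  next
    case (Suc j)
    define J where "J = (of_nat j :: complex)"
    have d: "d = 2 - a" using ad by (simp add: algebra_simps)
    have bc: "b * c = a * d - 1" using ad by (simp add: algebra_simps)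
    have h1: "a*a - a + b*c = a - 1" unfolding bc d by (simp add: algebra_simps)
    have h2: "d*d - d + b*c = d - 1" unfolding bc d by (simp add: algebra_simps)
    have "(1 + J*(a-1))*a + (J*b)*c = a + J*(a*a - a + b*c)" by (simp add: algebra_simps)
    then have E1: "(1 + J*(a-1))*a + (J*b)*c = 1 + (J+1)*(a-1)" unfolding h1 by (simp add: algebra_simps)
    have E2: "(1 + J*(a-1))*b + (J*b)*d = (J+1)*b" using ad(1) 
      by (simp add: algebra_simps) (metis distrib_left mult.commute mult.left_commute mult_2 one_add_one)
    have E3: "(J*c)*a + (1 + J*(d-1))*c = (J+1)*c" using ad(1)
      by (simp add: algebra_simps) (metis distrib_left mult.commute mult.left_commute mult_2 one_add_one)
    have "(J*c)*b + (1 + J*(d-1))*d = d + J*(d*d - d + b*c)" by (simp add: algebra_simps)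
    then have E4: "(J*c)*b + (1 + J*(d-1))*d = 1 + (J+1)*(d-1)" unfolding h2 by (simp add: algebra_simps)
    show ?case
      apply (simp only: mpow.simps(2) Suc.IH)
      unfolding C mat2_mult mat2_eq_iff of_nat_Suc J_def[symmetric]
      using E1 E2 E3 E4 by (simp add: algebra_simps)
  qed
  define L where "L = (\<lambda>p q r w. (a-1)*p + b*r + c*q + (d-1)*w)"
  have tr: "trace (mpow C j ** mat2 p q r w) = (p + w) + of_nat j * L p q r w" for j p q r w
    unfolding pw L_def by (simp add: algebra_simps)
  have RS: "Rq z ** Sq z = mat2 1 (-1) 1 0" using z0 by (simp add: gens)
  have "\<exists>p q r w. mat2 p q r w \<in> G z \<and> L p q r w \<noteq> 0"
  proof (rule ccontr)
    assume nt: "\<not> ?thesis"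
    have m1: "mat2 z 1 0 1 \<in> G z" using G_gens(1)[of z] by (simp add: gens)
    have m2: "mat2 0 (-1/z) 1 0 \<in> G z" using G_gens(3)[of z] by (simp add: gens)
    have m3: "mat2 1 (-1) 1 0 \<in> G z" using G_mult[OF G_gens(1)[of z] G_gens(3)[of z]] RS by simp
    have "L z 1 0 1 = 0" "L 0 (-1/z) 1 0 = 0" "L 1 (-1) 1 0 = 0"
      using m1 m2 m3 nt by blast+
    then have e: "(a-1)*z + c + (d-1) = 0" "b - c/z = 0" "(a-1) + b - c = 0"
      unfolding L_def by (auto simp: algebra_simps)
    have bz: "b * z = c" using e(2) z0 by (simp add: field_simps)
    have cc: "c = (a-1)*(1-z)" using e(1) ad(1) by (simp add: algebra_simps) (metis add_diff_cancel_left' diff_add_eq_diff_diff_swap diff_diff_eq2 one_add_one)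
    have bb: "b = -(a-1)*z" using e(3) cc by (simp add: algebra_simps)
    have "(a-1) * (z^2 - z + 1) = c - b*z" unfolding bb cc by (simp add: algebra_simps power2_eq_square)
    then have "(a-1) * (z^2 - z + 1) = 0" using bz by (simp add: mult.commute)
    then have a1: "a = 1" using h6 by simp
    then have "d = 1" "c = 0" using ad e(1) by auto
    then have "b = 0" using bz z0 by simp
    then have "C = mat 1" using a1 \<open>d = 1\<close> \<open>c = 0\<close> C by (simp add: mat2_one)
    then show False using C1 by simp
  qed
  then obtain p q r w where Y: "mat2 p q r w \<in> G z" "L p q r w \<noteq> 0" by blast
  have "inj (\<lambda>j. trace (mpow C j ** mat2 p q r w))"
    unfolding tr using Y(2) by (intro injI) simp
  moreover have "trace (mpow C j ** mat2 p q r w) \<in> trace ` G z" for j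
    using G_mult[OF G_mpow[OF CG] Y(1)] by blast
  ultimately show ?thesis by (rule inj_infinite_sub)
qed

lemma comm_one_commute:
  assumes "comm A B = mat 1" "det A \<noteq> 0" "det B \<noteq> 0"
  shows "A ** B = B ** A"
proof -
  have "comm A B ** (B ** A) = A ** B"
    unfolding comm_def using inv2_left[OF assms(2)] inv2_left[OF assms(3)]
    by (metis matrix_mul_assoc matrix_mul_rid)
  then show ?thesis using assms(1) by (simp add: matrix_mul_lid)
qed

lemma comm_commute_trace:
  assumes B: "B = mat2 om u 0 1" and om: "om \<noteq> 1" "om \<noteq> 0" and u: "u \<noteq> 0"
    and dA: "det A \<noteq> 0" and D: "D = comm A B" and DB: "D ** B = B ** D" and D1: "D \<noteq> mat 1"
  shows "trace D = om + inverse om"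
proof -
  have dB: "det B \<noteq> 0" using B om by simp
  have "D ** B = (A ** B ** inv2 A) ** (inv2 B ** B)"
    unfolding D comm_def by (simp only: matrix_mul_assoc)
  also have "\<dots> = A ** B ** inv2 A" using inv2_left[OF dB] by (simp add: matrix_mul_rid)
  finally have "trace (D ** B) = trace (inv2 A ** (A ** B))" using trace_mul_sym[of "A ** B" "inv2 A"] by simp
  also have "inv2 A ** (A ** B) = (inv2 A ** A) ** B" by (simp only: matrix_mul_assoc)
  also have "\<dots> = B" using inv2_left[OF dA] by (simp add: matrix_mul_lid)
  finally have trDB: "trace (D ** B) = om + 1" using B by simp
  have dD: "det D = 1" using D det_comm dA dB by simp
  obtain a b c d where Dm: "D = mat2 a b c d" using mat2_eta by blast
  have e: "c * om = c" "a * u + b = om * b + u * d" "a*d - b*c = 1" "a * om + c * u + d = om + 1"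
    using DB trDB dD unfolding Dm B mat2_mult mat2_eq_iff by (auto simp: algebra_simps)
  have c0: "c = 0" using e(1) om(1) by (metis mult.commute mult_cancel_left1)
  have dd: "d = om + 1 - a * om" using e(4) c0 by (simp add: algebra_simps)
  have ad1: "a*d = 1" using e(3) c0 by simp
  have "(a * om - 1) * (a - 1) = 0" using ad1 unfolding dd by (simp add: algebra_simps)
  then have "a * om - 1 = 0 \<or> a - 1 = 0" by simp
  then show ?thesis
  proof
    assume "a * om - 1 = 0"
    then have aom: "om * a = 1" by (simp add: algebra_simps)
    then have ai: "a = inverse om" using inverse_unique[OF aom] by simp
    have "a * om = 1" using aom by (simp add: algebra_simps)
    then have "d = om" using ad1 by (metis inverse_unique mult.commute)
    then have "a = inverse om" "d = om" using ai by auto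
    then show ?thesis using Dm by simp
  next
    assume "a - 1 = 0"
    then have a1: "a = 1" by simp
    then have d1: "d = 1" using e(3) c0 by simp
    then have "b * (om - 1) = 0" using e(2) a1 by (simp add: algebra_simps)
    then have "b = 0" using om(1) by simp
    then have "D = mat 1" using Dm a1 d1 c0 by (simp add: mat2_one)
    then show ?thesis using D1 by simp
  qed
qed

lemma trace_comm_S:
  assumes "z \<noteq> 0" "om \<noteq> 0"
  shows "trace (comm (Sq z) (mat2 om u 0 1)) = om + inverse om + z * u^2 / om"
  using assms unfolding comm_def gens inv2_mat2 mat2_mult trace_mat2
  by (simp add: field_simps power2_eq_square)

lemma S_not_commute:
  assumes "z \<noteq> 0" "u \<noteq> 0"
  shows "Sq z ** mat2 om u 0 1 \<noteq> mat2 om u 0 1 ** Sq z"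
  using assms unfolding gens mat2_mult mat2_eq_iff by auto

lemma R_pow: "mpow (Rq z) k = mat2 (z^k) (\<Sum>i<k. z^i) 0 1"
  by (induction k) (simp_all add: mat2_one gens mat2_eq_iff algebra_simps)

lemma geom: "(z - 1) * (\<Sum>i<k. (z::complex)^i) = z^k - 1"
  by (induction k) (auto simp: algebra_simps)

lemma prim_facts:
  assumes "primitive_root_of_unity n z"
  shows "z^n = 1" "n \<ge> 1" "\<And>k. 1 \<le> k \<Longrightarrow> k < n \<Longrightarrow> z^k \<noteq> 1" "cmod z = 1" "z \<noteq> 0"
proof -
  show zn: "z^n = 1" and n1: "n \<ge> 1" and "\<And>k. 1 \<le> k \<Longrightarrow> k < n \<Longrightarrow> z^k \<noteq> 1"
    using assms unfolding primitive_root_of_unity_def by auto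
  show "cmod z = 1" using power_eq_1_iff[OF zn] n1 by auto
  then show "z \<noteq> 0" by auto
qed

lemma good_power:
  assumes prim: "primitive_root_of_unity n z" and n7: "n \<ge> 7"
  shows "\<exists>m. z^m = cis (2*pi/n)"
proof -
  note pf = prim_facts[OF prim]
  have inj: "inj_on (\<lambda>i. z^i) {..<n}"
  proof (rule inj_onI)
    fix i j assume ij: "i \<in> {..<n}" "j \<in> {..<n}" "z^i = z^j"
    have *: False if "a < b" "b < n" "z^a = z^b" for a b
    proof -
      have "z^b = z^a * z^(b-a)" using that by (metis le_add_diff_inverse less_imp_le power_add)
      then have "z^(b-a) = 1" using that(3) pf(5) by simp
      then show False using pf(3)[of "b-a"] that by simp
    qed
    show "i = j" using *[of i j] *[of j i] ij by (cases i j rule: linorder_cases) auto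
  qed
  have sub: "(\<lambda>i. z^i) ` {..<n} \<subseteq> {w. w^n = 1}"
    using pf(1) by (auto simp: power_mult[symmetric] mult.commute[of _ n] power_mult)
  have "card ((\<lambda>i. z^i) ` {..<n}) = n" using card_image[OF inj] by simp
  also have "\<dots> = card {w::complex. w^n = 1}" using card_roots_unity_eq pf(2) by simp
  finally have eq: "(\<lambda>i. z^i) ` {..<n} = {w. w^n = 1}"
    using card_subset_eq[OF finite_roots_unity[of n] sub] pf(2) by simp
  have "cis (2*pi/n) ^ n = cis (real n * (2*pi/n))" by (rule Complex.DeMoivre)
  also have "real n * (2*pi/n) = 2*pi" using pf(2) by simp
  also have "cis (2*pi) = 1" by (simp add: complex_eq_iff)
  finally have "cis (2*pi/n) ^ n = 1" .
  then have "cis (2*pi/n) \<in> (\<lambda>i. z^i) ` {..<n}" using eq by simp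
  then show ?thesis by auto
qed

lemma cis_facts:
  fixes n :: nat
  assumes n7: "n \<ge> 7"
  shows "Re (cis (2*pi/n)) > 1/2" "Re (cis (2*pi/n)) < 1"
proof -
  have n0: "real n \<ge> 7" using n7 by simp
  have a: "2*pi/n < pi/3" using n0 pi_gt_zero by (simp add: field_simps)
  have b: "0 < 2*pi/n" using n0 pi_gt_zero by simp
  have "cos (pi/3) < cos (2*pi/n)"
    using cos_mono_less_eq[of "pi/3" "2*pi/n"] a b by simp
  then show "Re (cis (2*pi/n)) > 1/2" by (simp add: cos_60)
  have "cos (2*pi/n) < cos 0"
    using cos_mono_less_eq[of "2*pi/n" 0] a b by simp
  then show "Re (cis (2*pi/n)) < 1" by simp
qed

primrec citer :: "m2 \<Rightarrow> m2 \<Rightarrow> nat \<Rightarrow> m2" where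
  "citer A B 0 = A"
| "citer A B (Suc k) = comm (citer A B k) B"

lemma main_infinite:
  assumes prim: "primitive_root_of_unity n z" and n7: "n \<ge> 7"
  shows "infinite (trace ` G z)"
proof
  assume fin: "finite (trace ` G z)"
  note pf = prim_facts[OF prim]
  have z1: "cmod z = 1" and z0: "z \<noteq> 0" using pf by auto
  have h6: "z^2 - z + 1 \<noteq> 0"
  proof
    assume h0: "z^2 - z + 1 = 0"
    have "z^3 + 1 = (z+1)*(z^2 - z + 1)" by (simp add: algebra_simps power2_eq_square power3_eq_cube)
    then have "z^3 + 1 = 0" using h0 by simp
    then have "z^3 = -1" by (simp add: add_eq_0_iff2)
    moreover have "z^6 = (z^3)^2" by (simp flip: power_mult)
    ultimately have "z^6 = 1" by simp
    then show False using pf(3)[of 6] n7 by simp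
  qed
  obtain m where zm: "z^m = cis (2*pi/n)" using good_power[OF prim n7] by blast
  define om where "om = z^m"
  define u where "u = (\<Sum>i<m. z^i)"
  define B where "B = mpow (Rq z) m"
  have Bm: "B = mat2 om u 0 1" unfolding B_def om_def u_def by (rule R_pow)
  have BG: "B \<in> G z" unfolding B_def by (intro G_mpow G_gens)
  have om1: "cmod om = 1" unfolding om_def zm by simp
  have omRe: "Re om > 1/2" "Re om < 1" unfolding om_def zm using cis_facts[OF n7] by auto
  have om_ne1: "om \<noteq> 1" using omRe by auto
  have om0: "om \<noteq> 0" using om1 by auto
  have u0: "u \<noteq> 0" using geom[of z m] om_ne1 unfolding u_def om_def by auto
  define x where "x = 2 - 2 * Re om"
  have x01: "0 < x" "x < 1" using omRe unfolding x_def by auto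
  have iom: "inverse om = cnj om" by (rule unit_inv[OF om1])
  have sigB: "Re (sig B) = 4 - x"
  proof -
    have "sig B = (om + 1)^2 / om" unfolding sig_def Bm by simp
    also have "\<dots> = om + 2 + inverse om" using om0 by (simp add: field_simps power2_eq_square)
    finally show ?thesis unfolding iom x_def by simp
  qed
  define C where "C = citer (Sq z) B"
  have CG: "C k \<in> G z" for k
    unfolding C_def by (induction k) (auto intro: G_comm[OF _ BG z0] G_gens)
  have CS: "C (Suc k) = comm (C k) B" for k unfolding C_def by simp
  have C0: "C 0 = Sq z" unfolding C_def by simp
  have dC: "det (C k) \<noteq> 0" for k using G_inv(1)[OF CG z0] .
  have dB: "det B \<noteq> 0" using G_inv(1)[OF BG z0] .
  have sigR: "0 \<le> Re (sig (C k)) \<and> Re (sig (C k)) \<le> 4 \<and> sig (C k) = of_real (Re (sig (C k)))" for k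
    using sigma_real[OF fin z1 CG[of k]] unfolding sig_def by auto
  define y where "y = (\<lambda>k. 2 - Re (trace (C (Suc k))))"
  have trR: "trace (C (Suc k)) = of_real (Re (trace (C (Suc k))))" for k
    using comm_bound(1)[OF fin z1 CG[of k] BG] CS by simp
  have dC1: "det (C (Suc k)) = 1" for k using det_comm[OF dC dB] CS by simp
  have sigS: "Re (sig (C (Suc k))) = (Re (trace (C (Suc k))))^2" for k
  proof -
    have "sig (C (Suc k)) = (trace (C (Suc k)))^2" unfolding sig_def dC1 by simp
    also have "\<dots> = of_real ((Re (trace (C (Suc k))))^2)" by (subst trR) simp
    finally show ?thesis by simp
  qed
  have cle2: "Re (trace (C (Suc k))) \<le> 2" for k
  proof -
    have "(Re (trace (C (Suc k))))^2 \<le> 2^2" using sigR[of "Suc k"] sigS[of k] by simp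
    then show ?thesis using abs_le_square_iff[of "Re (trace (C (Suc k)))" 2] by auto
  qed
  have y0: "0 \<le> y k" for k unfolding y_def using cle2[of k] by simp
  have yb1: "y k \<le> (4 - Re (sig (C k))) * x / 4" for k
    using comm_bound(2)[OF fin z1 CG[of k] BG] CS sigB unfolding y_def by simp
  have inv: "(4 - Re (sig (C k))) / 4 \<le> x^k" for k
  proof (induction k)
    case 0 then show ?case unfolding C0 sig_def by (simp add: gens)
  next
    case (Suc k)
    define c where "c = Re (trace (C (Suc k)))"
    have "(4 - Re (sig (C (Suc k)))) / 4 = (4 - c^2)/4" using sigS[of k] c_def by simp
    also have "\<dots> \<le> 2 - c"
    proof -
      have "0 \<le> (c-2)^2" by simp
      then have "0 \<le> c*c - 4*c + 4" by (simp add: power2_eq_square algebra_simps)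
      then show ?thesis by (simp add: power2_eq_square field_simps)
    qed
    also have "\<dots> = y k" unfolding y_def c_def by simp
    also have "\<dots> \<le> (4 - Re (sig (C k))) / 4 * x" using yb1[of k] by simp
    also have "\<dots> \<le> x^k * x" using Suc x01 by (intro mult_right_mono) auto
    finally show ?case by (simp add: mult.commute)
  qed
  have yb: "y k \<le> x^(Suc k)" for k
  proof -
    have "y k \<le> (4 - Re (sig (C k))) / 4 * x" using yb1[of k] by simp
    also have "\<dots> \<le> x^k * x" using inv[of k] x01 by (intro mult_right_mono) auto
    finally show ?thesis by (simp add: mult.commute)
  qed
  have ex: "\<exists>k. C (Suc k) = mat 1"
  proof (rule ccontr)
    assume nt: "\<not> ?thesis"
    have ypos: "y k > 0" for k
    proof -
      have "y k \<noteq> 0"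
      proof
        assume "y k = 0"
        then have "trace (C (Suc k)) = 2" using trR[of k] unfolding y_def
          by (metis eq_iff_diff_eq_0 of_real_numeral)
        then show False using unipotent_infinite[OF z0 h6 CG dC1[of k]] nt fin by auto
      qed
      then show ?thesis using y0[of k] by simp
    qed
    define Y where "Y = (\<lambda>t. 2 - Re t) ` (trace ` G z) \<inter> {0<..}"
    have finY: "finite Y" unfolding Y_def using fin by simp
    have yY: "y k \<in> Y" for k unfolding Y_def y_def using ypos[of k] CG[of "Suc k"] y_def by auto
    define m0 where "m0 = Min Y"
    have m0Y: "m0 \<in> Y" unfolding m0_def using finY yY[of 0] by (intro Min_in) auto
    then have m0p: "m0 > 0" unfolding Y_def by auto
    obtain N where N: "x^N < m0" using real_arch_pow_inv[OF m0p x01(2)] by blast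
    have "m0 \<le> y N" unfolding m0_def using finY yY[of N] by simp
    also have "\<dots> \<le> x^(Suc N)" by (rule yb)
    also have "\<dots> \<le> x^N" using x01 by (simp add: mult_left_le_one_le)
    finally show False using N by simp
  qed
  define k0 where "k0 = (LEAST k. C (Suc k) = mat 1)"
  have Ck0: "C (Suc k0) = mat 1" unfolding k0_def using LeastI_ex[OF ex] .
  have kmin: "C (Suc j) \<noteq> mat 1" if "j < k0" for j using not_less_Least[of j "\<lambda>k. C (Suc k) = mat 1"] that k0_def by auto
  have comm_k0: "C k0 ** B = B ** C k0" using comm_one_commute[OF _ dC dB] Ck0 CS by simp
  show False
  proof (cases k0)
    case 0
    then show False using comm_k0 C0 S_not_commute[OF z0 u0, of om] Bm by simp
  next
    case (Suc j)
    have trj: "trace (C (Suc j)) = om + inverse om"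
      using comm_commute_trace[OF Bm om_ne1 om0 u0 dC[of j] CS[of j] _ kmin[of j]] comm_k0 Suc by simp
    have yj: "y j = x" unfolding y_def trj x_def iom by simp
    show False
    proof (cases j)
      case 0
      have "trace (C (Suc 0)) = om + inverse om + z * u^2 / om"
        unfolding CS C0 Bm by (rule trace_comm_S[OF z0 om0])
      then have "z * u^2 / om = 0" using trj 0 by simp
      then show False using z0 u0 om0 by simp
    next
      case (Suc i)
      have "x \<le> x^(Suc j)" using yb[of j] yj by simp
      also have "\<dots> \<le> x^2" using x01 Suc by (intro power_decreasing) auto
      also have "\<dots> < x" using x01 by (simp add: power2_eq_square)
      finally show False by simp
    qed
  qed
qed

definition Qc :: "complex \<Rightarrow> complex \<times> complex \<Rightarrow> complex" where
  "Qc be v = fst v * cnj (fst v) + snd v * cnj (snd v) + cnj (fst v) * be * snd v + fst v * cnj be * cnj (snd v)"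

lemma Q_gens:
  assumes w1: "cmod w = 1" and w1': "w \<noteq> 1"
  shows "Qc (inverse (w-1)) (app2 (Rq w) v) = Qc (inverse (w-1)) v"
    "Qc (inverse (w-1)) (app2 (Sq w) v) = Qc (inverse (w-1)) v"
    "Qc (inverse (w-1)) (app2 (Rq_inv w) v) = Qc (inverse (w-1)) v"
    "Qc (inverse (w-1)) (app2 (Sq_inv w) v) = Qc (inverse (w-1)) v"
proof -
  have w0: "w \<noteq> 0" using w1 by auto
  define iw where "iw = inverse w"
  define be where "be = inverse (w-1)"
  have cw: "cnj w = iw" using unit_inv[OF w1] iw_def by simp
  have ciw: "cnj iw = w" using cw iw_def by (metis complex_cnj_cnj complex_cnj_inverse)
  have h1: "w * iw = 1" using w0 iw_def by simp
  have h2: "(w - 1) * be = 1" using w1' be_def by simp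
  have cb: "cnj be = - (w * be)"
  proof -
    have "cnj be = inverse (iw - 1)" using cw be_def by simp
    also have "\<dots> = - (w * be)" using h1 h2 w0 w1' unfolding be_def iw_def
      by (simp add: field_simps)
    finally show ?thesis .
  qed
  have g: "Rq w = mat2 w 1 0 1" "Sq w = mat2 0 (-iw) 1 0" "Rq_inv w = mat2 iw (-iw) 0 1" "Sq_inv w = mat2 0 1 (-w) 0"
    unfolding iw_def by (simp_all add: gens divide_inverse)
  have R: "Qc be (app2 (Rq w) v) = Qc be v" for v
  proof -
    obtain a b where v: "v = (a,b)" by fastforce
    show ?thesis unfolding v Qc_def app2_def g using h1 h2
      by (simp add: cb cw ciw) algebra
  qed
  have S: "Qc be (app2 (Sq w) v) = Qc be v" for v
  proof -
    obtain a b where v: "v = (a,b)" by fastforce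
    show ?thesis unfolding v Qc_def app2_def g using h1 h2
      by (simp add: cb cw ciw) algebra
  qed
  have "Qc be (app2 (Rq_inv w) v) = Qc be (app2 (Rq w) (app2 (Rq_inv w) v))" using R by simp
  also have "\<dots> = Qc be v" using gen_invs[OF w0] by (simp add: app2_mult[symmetric] app2_one)
  finally have Ri: "Qc be (app2 (Rq_inv w) v) = Qc be v" .
  have "Qc be (app2 (Sq_inv w) v) = Qc be (app2 (Sq w) (app2 (Sq_inv w) v))" using S by simp
  also have "\<dots> = Qc be v" using gen_invs[OF w0] by (simp add: app2_mult[symmetric] app2_one)
  finally have Si: "Qc be (app2 (Sq_inv w) v) = Qc be v" .
  show "Qc (inverse (w-1)) (app2 (Rq w) v) = Qc (inverse (w-1)) v"
    "Qc (inverse (w-1)) (app2 (Sq w) v) = Qc (inverse (w-1)) v"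
    "Qc (inverse (w-1)) (app2 (Rq_inv w) v) = Qc (inverse (w-1)) v"
    "Qc (inverse (w-1)) (app2 (Sq_inv w) v) = Qc (inverse (w-1)) v"
    using R[of v] S[of v] Ri Si unfolding be_def by auto
qed

lemma Q_inv:
  assumes "cmod w = 1" "w \<noteq> 1" "M \<in> Gq"
  shows "Qc (inverse (w-1)) (app2 (M w) v) = Qc (inverse (w-1)) v"
  using assms(3)
proof (induction M arbitrary: v rule: Gq.induct)
  case one then show ?case by (simp add: app2_one)
next
  case (R M) then show ?case using Q_gens[OF assms(1,2)] by (simp add: app2_mult)
next
  case (Rinv M) then show ?case using Q_gens[OF assms(1,2)] by (simp add: app2_mult)
next
  case (S M) then show ?case using Q_gens[OF assms(1,2)] by (simp add: app2_mult)
next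
  case (Sinv M) then show ?case using Q_gens[OF assms(1,2)] by (simp add: app2_mult)
qed

lemma Q_pos:
  assumes "cmod be < 1" "v \<noteq> (0,0)"
  shows "Re (Qc be v) > 0"
proof -
  obtain a b where v: "v = (a,b)" by fastforce
  have "Re (Qc be v) = (cmod a)^2 + (cmod b)^2 + 2 * Re (cnj a * be * b)"
    unfolding v Qc_def cmod_power2 by (simp add: algebra_simps power2_eq_square)
  moreover have "Re (cnj a * be * b) \<ge> - (cmod a * cmod be * cmod b)"
    using abs_Re_le_cmod[of "cnj a * be * b"] by (simp add: norm_mult)
  moreover have "cmod a * cmod be * cmod b \<le> cmod a * cmod b * cmod be" by (simp add: mult_ac)
  moreover have "2 * (cmod a * cmod b) \<le> (cmod a)^2 + (cmod b)^2"
    using zero_le_power2[of "cmod a - cmod b"] by (simp add: power2_eq_square algebra_simps)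
  moreover have "(cmod a)^2 + (cmod b)^2 > 0" using assms(2) v by (auto simp: add_pos_nonneg add_nonneg_pos)
  moreover have "cmod a * cmod b * cmod be \<le> cmod a * cmod b" using assms(1)
    by (simp add: mult_left_le)
  moreover have "cmod a * cmod b * cmod be < cmod a * cmod b \<or> cmod a * cmod b = 0"
    using assms(1) by (cases "cmod a * cmod b = 0") auto
  ultimately show ?thesis by (smt (verit))
qed

lemma Q_hom: "Qc be (l * a, l * b) = (l * cnj l) * Qc be (a, b)"
  unfolding Qc_def by (simp add: algebra_simps)

lemma unitary_bound:
  assumes w1: "cmod w = 1" and wr: "Re w < 1/2" and M: "M \<in> Gq"
  shows "cmod (trace (M w)) \<le> 2"
proof -
  have w1': "w \<noteq> 1" using wr by auto
  define be where "be = inverse (w-1)"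
  have "(cmod (w - 1))^2 = (Re w - 1)^2 + (Im w)^2" by (simp add: cmod_power2)
  also have "\<dots> = (cmod w)^2 - 2 * Re w + 1" using cmod_power2[of w] by (simp add: power2_eq_square algebra_simps)
  finally have "(cmod (w - 1))^2 > 1" using w1 wr by simp
  then have "cmod (w - 1) > 1" by (metis abs_norm_cancel one_less_power one_power2 power2_less_imp_less norm_ge_zero)
  then have be1: "cmod be < 1" unfolding be_def by (simp add: norm_inverse inverse_less_1_iff)
  have eig: "cmod l = 1" if l: "l^2 - trace (M w) * l + det (M w) = 0" for l
  proof -
    obtain v where v: "v \<noteq> (0,0)" "app2 (M w) v = (l * fst v, l * snd v)" using eigen_exists[OF l] by blast
    have "Qc be (l * fst v, l * snd v) = Qc be v" using Q_inv[OF w1 w1' M, of v] v(2) be_def by simp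
    then have "(l * cnj l) * Qc be v = Qc be v" using Q_hom[of be l "fst v" "snd v"] by simp
    moreover have "Qc be v \<noteq> 0" using Q_pos[OF be1 v(1)] by auto
    ultimately have "l * cnj l = 1" by simp
    then have "(cmod l)^2 = 1" using complex_norm_square[of l] by (metis of_real_eq_1_iff)
    then show ?thesis using norm_ge_zero[of l] by (auto simp: power2_eq_1_iff)
  qed
  obtain l1 l2 where l: "l1 + l2 = trace (M w)" "l1 * l2 = det (M w)" using roots_exist by blast
  have "l1^2 - trace (M w) * l1 + det (M w) = 0" unfolding l[symmetric] by (simp add: power2_eq_square algebra_simps)
  moreover have "l2^2 - trace (M w) * l2 + det (M w) = 0" unfolding l[symmetric] by (simp add: power2_eq_square algebra_simps)
  ultimately have "cmod l1 = 1" "cmod l2 = 1" using eig by auto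
  then show ?thesis using l(1) norm_triangle_ineq[of l1 l2] by simp
qed

lemma mult_entry: "((X::m2) ** Y) $ i $ j = X$i$1 * Y$1$j + X$i$2 * Y$2$j"
  by (simp add: matrix_matrix_mult_def sum_2)

lemma entries_closed:
  assumes add: "\<And>f g. P f \<Longrightarrow> P g \<Longrightarrow> P (\<lambda>w. f w + g w)"
    and mul: "\<And>f g. P f \<Longrightarrow> P g \<Longrightarrow> P (\<lambda>w. f w * g w)"
    and gone: "\<And>i j. P (\<lambda>w. (mat 1 :: m2) $ i $ j)"
    and gR: "\<And>i j. P (\<lambda>w. Rq w $ i $ j)" and gRi: "\<And>i j. P (\<lambda>w. Rq_inv w $ i $ j)"
    and gS: "\<And>i j. P (\<lambda>w. Sq w $ i $ j)" and gSi: "\<And>i j. P (\<lambda>w. Sq_inv w $ i $ j)"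
    and M: "M \<in> Gq"
  shows "P (\<lambda>w. M w $ i $ j)"
  using M
proof (induction M arbitrary: i j rule: Gq.induct)
  case one then show ?case by (rule gone)
next
  case (R M) then show ?case unfolding mult_entry by (intro add mul gR)
next
  case (Rinv M) then show ?case unfolding mult_entry by (intro add mul gRi)
next
  case (S M) then show ?case unfolding mult_entry by (intro add mul gS)
next
  case (Sinv M) then show ?case unfolding mult_entry by (intro add mul gSi)
qed

lemma entry_cases:
  assumes "P (\<lambda>w. F w $ 1 $ 1)" "P (\<lambda>w. F w $ 1 $ 2)" "P (\<lambda>w. F w $ 2 $ 1)" "P (\<lambda>w. F w $ 2 $ 2)"
  shows "P (\<lambda>w. F w $ (i::2) $ (j::2))"
proof -
  have "i = 1 \<or> i = 2" "j = 1 \<or> j = 2" using exhaust_2 by auto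
  then show ?thesis using assms by auto
qed

lemma app2_scale: "app2 X (c * a, c * b) = (c * fst (app2 X (a,b)), c * snd (app2 X (a,b)))"
  unfolding app2_def by (simp add: algebra_simps)

lemma six_bound:
  assumes h: "z^2 - z + 1 = 0" and z1: "cmod z = 1" and M: "M \<in> Gq"
  shows "cmod (trace (M z)) \<le> 2"
proof -
  have z0: "z \<noteq> 0" using z1 by auto
  have zz: "1 - z = -(z^2)" using h by (simp add: algebra_simps)
  define v0 where "v0 = (1::complex, 1 - z)"
  have gen: "app2 (Rq z) v0 = (1 * 1, 1 * (1-z))" "app2 (Rq_inv z) v0 = (1 * 1, 1 * (1-z))"
    "app2 (Sq z) v0 = (z * 1, z * (1-z))" "app2 (Sq_inv z) v0 = ((1-z) * 1, (1-z) * (1-z))"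
    unfolding v0_def app2_def gens using z0 zz h
    by (auto simp: field_simps power2_eq_square)
  have n1: "cmod (1 - z) = 1" unfolding zz using z1 by (simp add: norm_power)
  have "\<exists>c. cmod c = 1 \<and> app2 (M z) v0 = (c * 1, c * (1 - z))" using M
  proof (induction M rule: Gq.induct)
    case one then show ?case by (auto simp: app2_one v0_def intro: exI[of _ 1])
  next
    case (R M) then obtain c where c: "cmod c = 1" "app2 (M z) v0 = (c * 1, c * (1 - z))" by auto
    show ?case using c gen unfolding app2_mult by (auto simp: v0_def)
  next
    case (Rinv M) then obtain c where c: "cmod c = 1" "app2 (M z) v0 = (c * 1, c * (1 - z))" by auto
    show ?case using c gen unfolding app2_mult by (auto simp: v0_def)
  next
    case (S M) then obtain c where c: "cmod c = 1" "app2 (M z) v0 = (c * 1, c * (1 - z))" by auto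
    have "app2 (M z ** Sq z) v0 = (z * c * 1, z * c * (1 - z))"
      unfolding app2_mult gen(3) app2_scale[of _ z 1 "1-z"] using c(2) by (simp add: v0_def mult_ac)
    then show ?case using c z1 by (intro exI[of _ "z * c"]) (auto simp: norm_mult)
  next
    case (Sinv M) then obtain c where c: "cmod c = 1" "app2 (M z) v0 = (c * 1, c * (1 - z))" by auto
    have "app2 (M z ** Sq_inv z) v0 = ((1-z) * c * 1, (1-z) * c * (1 - z))"
      unfolding app2_mult gen(4) app2_scale[of _ "1-z" 1 "1-z"] using c(2) by (simp add: v0_def mult_ac)
    then show ?case using c n1 by (intro exI[of _ "(1-z) * c"]) (auto simp: norm_mult)
  qed
  then obtain c where c: "cmod c = 1" "app2 (M z) v0 = (c * fst v0, c * snd v0)" by (auto simp: v0_def)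
  have "c^2 - trace (M z) * c + det (M z) = 0" by (rule eigen_root[OF _ c(2)]) (simp add: v0_def)
  then have eq: "c * trace (M z) = c * (c + det (M z) / c)" using c(1) by (auto simp: field_simps power2_eq_square)
  have "c \<noteq> 0" using c(1) by auto
  then have "trace (M z) = c + det (M z) / c" using eq by simp
  moreover have "cmod (det (M z)) = 1" using G_det_aux[OF M z1] .
  ultimately show ?thesis using c(1) norm_triangle_ineq[of c "det (M z) / c"] by (simp add: norm_divide)
qed

definition inZ :: "complex \<Rightarrow> complex \<Rightarrow> bool" where
  "inZ z t \<longleftrightarrow> (\<exists>a b::int. t = of_int a + of_int b * z)"

lemma inZ_trace:
  assumes zz: "z * z = of_int p + of_int q * z" and zi: "inverse z = of_int r + of_int r' * z"
    and z0: "z \<noteq> 0" and M: "M \<in> Gq"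
  shows "inZ z (trace (M z))"
proof -
  define P where "P = (\<lambda>f. inZ z (f z))"
  have add: "P (\<lambda>w. f w + g w)" if pf: "P f" and pg: "P g" for f g
  proof -
    obtain a b c d where "f z = of_int a + of_int b * z" "g z = of_int c + of_int d * z"
      using pf pg unfolding P_def inZ_def by blast
    then show ?thesis unfolding P_def inZ_def
      by (intro exI[of _ "a+c"] exI[of _ "b+d"]) (simp add: algebra_simps)
  qed
  have mul: "P (\<lambda>w. f w * g w)" if pf: "P f" and pg: "P g" for f g
  proof -
    obtain a b c d where fg: "f z = of_int a + of_int b * z" "g z = of_int c + of_int d * z"
      using pf pg unfolding P_def inZ_def by blast
    have "f z * g z = of_int (a*c) + of_int (a*d + b*c) * z + of_int (b*d) * (z * z)"
      unfolding fg by (simp add: algebra_simps)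
    also have "\<dots> = of_int (a*c + b*d*p) + of_int (a*d + b*c + b*d*q) * z"
      unfolding zz by (simp add: algebra_simps)
    finally show ?thesis unfolding P_def inZ_def by blast
  qed
  have c: "P (\<lambda>w. of_int a)" for a unfolding P_def inZ_def by (intro exI[of _ a] exI[of _ 0]) simp
  have c0: "P (\<lambda>w. 0)" "P (\<lambda>w. 1)" "P (\<lambda>w. -1)" using c[of 0] c[of 1] c[of "-1"] by simp_all
  have cz: "P (\<lambda>w. w)" unfolding P_def inZ_def by (intro exI[of _ 0] exI[of _ 1]) simp
  have czm: "P (\<lambda>w. - w)" using mul[OF c0(3) cz] by simp
  have ci: "P (\<lambda>w. 1 / w)" unfolding P_def inZ_def using zi by (auto simp: divide_inverse)
  have cim: "P (\<lambda>w. - 1 / w)" using mul[OF c0(3) ci] by simp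
  have g1: "P (\<lambda>w. (mat 1::m2) $ i $ j)" for i j
    by (rule entry_cases) (simp_all only: mat2_one mat2_nth c0)
  have g2: "P (\<lambda>w. Rq w $ i $ j)" for i j
    by (rule entry_cases) (simp_all only: gens mat2_nth c0 cz)
  have g3: "P (\<lambda>w. Rq_inv w $ i $ j)" for i j
    by (rule entry_cases) (simp_all only: gens mat2_nth c0 ci cim)
  have g4: "P (\<lambda>w. Sq w $ i $ j)" for i j
    by (rule entry_cases) (simp_all only: gens mat2_nth c0 cim)
  have g5: "P (\<lambda>w. Sq_inv w $ i $ j)" for i j
    by (rule entry_cases) (simp_all only: gens mat2_nth c0 czm)
  have "P (\<lambda>w. M w $ i $ j)" for i j
    by (rule entries_closed[OF add mul g1 g2 g3 g4 g5 M])
  then have "P (\<lambda>w. M w $ 1 $ 1 + M w $ 2 $ 2)" by (intro add)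
  then show ?thesis unfolding P_def trace_def sum_2 by simp
qed


lemma lattice_finite:
  assumes "Im z \<noteq> 0"
  shows "finite {t. inZ z t \<and> cmod t \<le> 2}"
proof -
  define B :: int where "B = ceiling (2 / \<bar>Im z\<bar>)"
  define A :: int where "A = ceiling (2 + of_int B * \<bar>Re z\<bar>)"
  have "{t. inZ z t \<and> cmod t \<le> 2} \<subseteq> (\<lambda>(a,b). of_int a + of_int b * z) ` ({-A..A} \<times> {-B..B})"
  proof
    fix t assume t: "t \<in> {t. inZ z t \<and> cmod t \<le> 2}"
    then obtain a b :: int where ab: "t = of_int a + of_int b * z" unfolding inZ_def by auto
    have "\<bar>Im t\<bar> \<le> 2" using t abs_Im_le_cmod[of t] by simp
    then have "\<bar>of_int b\<bar> * \<bar>Im z\<bar> \<le> 2" using ab by (simp add: abs_mult)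
    then have "\<bar>of_int b\<bar> \<le> 2 / \<bar>Im z\<bar>" using assms by (simp add: field_simps)
    then have bB: "\<bar>b\<bar> \<le> B" unfolding B_def by linarith
    have "\<bar>Re t\<bar> \<le> 2" using t abs_Re_le_cmod[of t] by simp
    then have "\<bar>of_int a + of_int b * Re z\<bar> \<le> 2" using ab by simp
    moreover have "\<bar>of_int b * Re z\<bar> \<le> of_int B * \<bar>Re z\<bar>"
      using bB by (simp add: abs_mult mult_right_mono)
    ultimately have "\<bar>real_of_int a\<bar> \<le> 2 + of_int B * \<bar>Re z\<bar>" by linarith
    then have "\<bar>a\<bar> \<le> A" unfolding A_def by linarith
    then show "t \<in> (\<lambda>(a,b). of_int a + of_int b * z) ` ({-A..A} \<times> {-B..B})"
      using bB ab by (auto intro!: image_eqI[of _ _ "(a,b)"])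
  qed
  then show ?thesis by (rule finite_subset) auto
qed

definition in5 :: "(complex \<Rightarrow> complex) \<Rightarrow> bool" where
  "in5 f \<longleftrightarrow> (\<exists>a0 a1 a2 a3 a4 :: int. \<forall>w. w^5 = 1 \<longrightarrow>
     f w = of_int a0 + of_int a1 * w + of_int a2 * w^2 + of_int a3 * w^3 + of_int a4 * w^4)"

lemma conv5:
  fixes w A0 A1 A2 A3 A4 B0 B1 B2 B3 B4 :: complex
  assumes "w^5 = 1"
  shows "(A0 + A1*w + A2*w^2 + A3*w^3 + A4*w^4) * (B0 + B1*w + B2*w^2 + B3*w^3 + B4*w^4) =
    (A0*B0 + A1*B4 + A2*B3 + A3*B2 + A4*B1) + (A0*B1 + A1*B0 + A2*B4 + A3*B3 + A4*B2)*w
    + (A0*B2 + A1*B1 + A2*B0 + A3*B4 + A4*B3)*w^2 + (A0*B3 + A1*B2 + A2*B1 + A3*B0 + A4*B4)*w^3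
    + (A0*B4 + A1*B3 + A2*B2 + A3*B1 + A4*B0)*w^4"
  using assms by algebra

lemma in5_add: "in5 f \<Longrightarrow> in5 g \<Longrightarrow> in5 (\<lambda>w. f w + g w)"
proof -
  assume "in5 f" "in5 g"
  then obtain a0 a1 a2 a3 a4 b0 b1 b2 b3 b4 :: int where
    f: "\<forall>w. w^5 = 1 \<longrightarrow> f w = of_int a0 + of_int a1 * w + of_int a2 * w^2 + of_int a3 * w^3 + of_int a4 * w^4" and
    g: "\<forall>w. w^5 = 1 \<longrightarrow> g w = of_int b0 + of_int b1 * w + of_int b2 * w^2 + of_int b3 * w^3 + of_int b4 * w^4"
    unfolding in5_def by blast
  show ?thesis unfolding in5_def
    by (rule exI[of _ "a0+b0"], rule exI[of _ "a1+b1"], rule exI[of _ "a2+b2"], rule exI[of _ "a3+b3"],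
        rule exI[of _ "a4+b4"]) (auto simp: f g algebra_simps)
qed

lemma in5_mul: "in5 f \<Longrightarrow> in5 g \<Longrightarrow> in5 (\<lambda>w. f w * g w)"
proof -
  assume "in5 f" "in5 g"
  then obtain a0 a1 a2 a3 a4 b0 b1 b2 b3 b4 :: int where
    f: "\<forall>w. w^5 = 1 \<longrightarrow> f w = of_int a0 + of_int a1 * w + of_int a2 * w^2 + of_int a3 * w^3 + of_int a4 * w^4" and
    g: "\<forall>w. w^5 = 1 \<longrightarrow> g w = of_int b0 + of_int b1 * w + of_int b2 * w^2 + of_int b3 * w^3 + of_int b4 * w^4"
    unfolding in5_def by blast
  show ?thesis unfolding in5_def
    apply (rule exI[of _ "a0*b0 + a1*b4 + a2*b3 + a3*b2 + a4*b1"], rule exI[of _ "a0*b1 + a1*b0 + a2*b4 + a3*b3 + a4*b2"],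
      rule exI[of _ "a0*b2 + a1*b1 + a2*b0 + a3*b4 + a4*b3"], rule exI[of _ "a0*b3 + a1*b2 + a2*b1 + a3*b0 + a4*b4"],
      rule exI[of _ "a0*b4 + a1*b3 + a2*b2 + a3*b1 + a4*b0"])
    apply (intro allI impI)
    apply (simp only: f g conv5 of_int_add of_int_mult)
    done
qed

lemma in5_const: "in5 (\<lambda>w. of_int c)"
  unfolding in5_def by (intro exI[of _ c] exI[of _ 0]) simp

lemma in5_id: "in5 (\<lambda>w. w)"
  unfolding in5_def by (rule exI[of _ 0], rule exI[of _ 1], rule exI[of _ 0], rule exI[of _ 0], rule exI[of _ 0]) simp

lemma in5_inv: "in5 (\<lambda>w. 1 / w)"
proof -
  have "1 / w = w^4" if "w^5 = 1" for w :: complex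
  proof -
    have "w * w^4 = 1" using that by (simp add: power_Suc[symmetric] del: power_Suc)
    then show ?thesis by (metis divide_eq_eq mult.commute mult_zero_left zero_neq_one)
  qed
  note h = this
  show ?thesis unfolding in5_def
    by (rule exI[of _ 0], rule exI[of _ 0], rule exI[of _ 0], rule exI[of _ 0], rule exI[of _ 1]) (simp add: h)
qed

lemma in5_trace: "M \<in> Gq \<Longrightarrow> in5 (\<lambda>w. trace (M w))"
proof -
  assume M: "M \<in> Gq"
  have c0: "in5 (\<lambda>w. 0)" "in5 (\<lambda>w. 1)" "in5 (\<lambda>w. -1)"
    using in5_const[of 0] in5_const[of 1] in5_const[of "-1"] by simp_all
  have czm: "in5 (\<lambda>w. - w)" using in5_mul[OF c0(3) in5_id] by simp
  have cim: "in5 (\<lambda>w. - 1 / w)" using in5_mul[OF c0(3) in5_inv] by simp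
  note ci = in5_inv and cz = in5_id
  have g1: "in5 (\<lambda>w. (mat 1::m2) $ i $ j)" for i j
    by (rule entry_cases) (simp_all only: mat2_one mat2_nth c0)
  have g2: "in5 (\<lambda>w. Rq w $ i $ j)" for i j
    by (rule entry_cases) (simp_all only: gens mat2_nth c0 cz)
  have g3: "in5 (\<lambda>w. Rq_inv w $ i $ j)" for i j
    by (rule entry_cases) (simp_all only: gens mat2_nth c0 ci cim)
  have g4: "in5 (\<lambda>w. Sq w $ i $ j)" for i j
    by (rule entry_cases) (simp_all only: gens mat2_nth c0 cim)
  have g5: "in5 (\<lambda>w. Sq_inv w $ i $ j)" for i j
    by (rule entry_cases) (simp_all only: gens mat2_nth c0 czm)
  have "in5 (\<lambda>w. M w $ i $ j)" for i j
    by (rule entries_closed[OF in5_add in5_mul g1 g2 g3 g4 g5 M])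
  then have "in5 (\<lambda>w. M w $ 1 $ 1 + M w $ 2 $ 2)" by (intro in5_add)
  then show ?thesis unfolding trace_def sum_2 by simp
qed

lemma re5:
  assumes "w^5 = 1" "w \<noteq> 1"
  shows "Re w < 1/2" "cmod w = 1"
proof -
  show w1: "cmod w = 1" using power_eq_1_iff[OF assms(1)] by simp
  have "(w - 1) * (1 + w + w^2 + w^3 + w^4) = w^5 - 1" by algebra
  then have s0: "1 + w + w^2 + w^3 + w^4 = 0" using assms by simp
  have "w * w^4 = 1" using assms(1) by (simp add: power_Suc[symmetric] del: power_Suc)
  then have "inverse w = w^4" by (metis inverse_unique)
  then have cw: "cnj w = w^4" using unit_inv[OF w1] by simp
  define x where "x = w + w^4"
  have "x^2 + x - 1 = 0" unfolding x_def using s0 assms(1) by algebra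
  moreover have "x = of_real (2 * Re w)" unfolding x_def cw[symmetric] by (simp add: complex_add_cnj)
  ultimately have "complex_of_real ((2 * Re w)^2 + 2 * Re w - 1) = 0" by simp
  then have r: "(2 * Re w)^2 + 2 * Re w - 1 = 0" by (simp only: of_real_eq_0_iff)
  show "Re w < 1/2"
  proof (rule ccontr)
    assume "\<not> Re w < 1/2"
    then have "2 * Re w \<ge> 1" by simp
    then have "1 * 1 \<le> (2 * Re w) * (2 * Re w)" by (intro mult_mono) auto
    then have "(2 * Re w)^2 \<ge> 1" by (simp add: power2_eq_square)
    then show False using r \<open>2 * Re w \<ge> 1\<close> by linarith
  qed
qed

lemma coef_bound:
  fixes T1 T2 T3 T4 e1 e2 e3 e4 :: complex and d :: int
  assumes "of_int (5 * d) = T1 * e1 + T2 * e2 + T3 * e3 + T4 * e4"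
    "cmod T1 \<le> 2" "cmod T2 \<le> 2" "cmod T3 \<le> 2" "cmod T4 \<le> 2"
    "cmod e1 \<le> 2" "cmod e2 \<le> 2" "cmod e3 \<le> 2" "cmod e4 \<le> 2"
  shows "d \<in> {-3..3}"
proof -
  have b: "cmod (T * e) \<le> 4" if "cmod T \<le> 2" "cmod e \<le> 2" for T e
    using mult_mono[OF that] by (simp add: norm_mult)
  have t1: "cmod (T1 * e1 + T2 * e2 + T3 * e3 + T4 * e4) \<le> cmod (T1 * e1 + T2 * e2 + T3 * e3) + cmod (T4 * e4)"
    by (rule norm_triangle_ineq)
  have t2: "cmod (T1 * e1 + T2 * e2 + T3 * e3) \<le> cmod (T1 * e1 + T2 * e2) + cmod (T3 * e3)"
    by (rule norm_triangle_ineq)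
  have t3: "cmod (T1 * e1 + T2 * e2) \<le> cmod (T1 * e1) + cmod (T2 * e2)"
    by (rule norm_triangle_ineq)
  have "cmod (T1 * e1) \<le> 4" "cmod (T2 * e2) \<le> 4" "cmod (T3 * e3) \<le> 4" "cmod (T4 * e4) \<le> 4"
    using b assms(2-9) by auto
  then have "cmod (of_int (5 * d) :: complex) \<le> 16" unfolding assms(1) using t1 t2 t3 by linarith
  then have "\<bar>real_of_int (5 * d)\<bar> \<le> 16" by (simp only: norm_of_int)
  then have "real_of_int (5 * d) \<le> 16" "- 16 \<le> real_of_int (5 * d)" by linarith+
  then have "5 * d \<le> 16" "- 16 \<le> 5 * d" by linarith+
  then show ?thesis by simp
qed

lemma ediff: "cmod (z::complex) = 1 \<Longrightarrow> cmod (z^p - z^q) \<le> 2"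
  using norm_triangle_ineq4[of "z^p" "z^q"] by (simp add: norm_power)

lemma five_finite:
  assumes prim: "primitive_root_of_unity 5 z"
  shows "finite (trace ` G z)"
proof -
  note pf = prim_facts[OF prim]
  have z5: "z^5 = 1" and z1: "cmod z = 1" using pf by auto
  have "(z - 1) * (1 + z + z^2 + z^3 + z^4) = z^5 - 1" by algebra
  then have s0: "1 + z + z^2 + z^3 + z^4 = 0" using z5 pf(3)[of 1] by simp
  define F where "F = (\<lambda>(b0::int,b1::int,b2::int,b3::int). of_int b0 + of_int b1 * z + of_int b2 * z^2 + of_int b3 * z^3) ` ({-3..3} \<times> {-3..3} \<times> {-3..3} \<times> {-3..3})"
  have "trace ` G z \<subseteq> F"
  proof
    fix t assume "t \<in> trace ` G z"
    then obtain M where M: "M \<in> Gq" "t = trace (M z)" unfolding Gq_at_def by auto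
    obtain a0 a1 a2 a3 a4 :: int where a: "\<forall>w. w^5 = 1 \<longrightarrow>
      trace (M w) = of_int a0 + of_int a1 * w + of_int a2 * w^2 + of_int a3 * w^3 + of_int a4 * w^4"
      using in5_trace[OF M(1)] unfolding in5_def by blast
    have pk: "(z^k)^5 = 1" for k using z5 by (metis mult.commute power_mult power_one)
    have nk: "z^k \<noteq> 1" if "k \<in> {1,2,3,4::nat}" for k using pf(3)[of k] that by auto
    have bd: "cmod (trace (M (z^k))) \<le> 2" if "k \<in> {1,2,3,4::nat}" for k
      using unitary_bound[OF re5(2)[OF pk nk[OF that]] re5(1)[OF pk nk[OF that]] M(1)] .
    define T1 where "T1 = trace (M z)"
    define T2 where "T2 = trace (M (z^2))"
    define T3 where "T3 = trace (M (z^3))"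
    define T4 where "T4 = trace (M (z^4))"
    have b: "cmod T1 \<le> 2" "cmod T2 \<le> 2" "cmod T3 \<le> 2" "cmod T4 \<le> 2"
      unfolding T1_def T2_def T3_def T4_def using bd[of 1] bd[of 2] bd[of 3] bd[of 4] by auto
    have T1: "T1 = of_int a0 + of_int a1 * z + of_int a2 * z^2 + of_int a3 * z^3 + of_int a4 * z^4"
      unfolding T1_def using a z5 by blast
    have T2: "T2 = of_int a0 + of_int a1 * (z^2) + of_int a2 * (z^2)^2 + of_int a3 * (z^2)^3 + of_int a4 * (z^2)^4"
      unfolding T2_def using a pk[of 2] by blast
    have T3: "T3 = of_int a0 + of_int a1 * (z^3) + of_int a2 * (z^3)^2 + of_int a3 * (z^3)^3 + of_int a4 * (z^3)^4"
      unfolding T3_def using a pk[of 3] by blast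
    have T4: "T4 = of_int a0 + of_int a1 * (z^4) + of_int a2 * (z^4)^2 + of_int a3 * (z^4)^3 + of_int a4 * (z^4)^4"
      unfolding T4_def using a pk[of 4] by blast
    have e: "cmod (z^p - z^q) \<le> 2" for p q using ediff[OF z1] .
    have F0: "of_int (5 * (a0 - a4)) = T1 * (z^0 - z^1) + T2 * (z^0 - z^2) + T3 * (z^0 - z^3) + T4 * (z^0 - z^4)"
      unfolding T1 T2 T3 T4 of_int_mult of_int_diff of_int_numeral using z5 s0 by algebra
    have F1: "of_int (5 * (a1 - a4)) = T1 * (z^4 - z^1) + T2 * (z^3 - z^2) + T3 * (z^2 - z^3) + T4 * (z^1 - z^4)"
      unfolding T1 T2 T3 T4 of_int_mult of_int_diff of_int_numeral using z5 s0 by algebra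
    have F2: "of_int (5 * (a2 - a4)) = T1 * (z^3 - z^1) + T2 * (z^1 - z^2) + T3 * (z^4 - z^3) + T4 * (z^2 - z^4)"
      unfolding T1 T2 T3 T4 of_int_mult of_int_diff of_int_numeral using z5 s0 by algebra
    have F3: "of_int (5 * (a3 - a4)) = T1 * (z^2 - z^1) + T2 * (z^4 - z^2) + T3 * (z^1 - z^3) + T4 * (z^3 - z^4)"
      unfolding T1 T2 T3 T4 of_int_mult of_int_diff of_int_numeral using z5 s0 by algebra
    have d: "a0 - a4 \<in> {-3..3}" "a1 - a4 \<in> {-3..3}" "a2 - a4 \<in> {-3..3}" "a3 - a4 \<in> {-3..3}"
      using coef_bound[OF F0 b e e e e] coef_bound[OF F1 b e e e e]
        coef_bound[OF F2 b e e e e] coef_bound[OF F3 b e e e e] by auto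
    have "t = of_int (a0 - a4) + of_int (a1 - a4) * z + of_int (a2 - a4) * z^2 + of_int (a3 - a4) * z^3"
      using M(2) T1 T1_def s0 unfolding of_int_diff by algebra
    then show "t \<in> F" unfolding F_def using d by (auto intro!: image_eqI[of _ _ "(a0 - a4, a1 - a4, a2 - a4, a3 - a4)"])
  qed
  moreover have "finite F" unfolding F_def by simp
  ultimately show ?thesis by (rule finite_subset)
qed

lemma not_root_infinite:
  assumes z0: "z \<noteq> 0" and nr: "\<forall>m\<ge>1. z^m \<noteq> 1"
  shows "infinite (trace ` G z)"
proof -
  have tr: "trace (mpow (Rq z) k) = z^k + 1" for k by (simp add: R_pow)
  have "inj (\<lambda>k. z^k + 1)"
  proof (rule injI)
    fix i j assume "z^i + 1 = z^j + 1"
    then have e: "z^i = z^j" by simp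
    have *: False if "a < b" "z^a = z^b" for a b
    proof -
      have "z^b = z^a * z^(b-a)" using that by (metis le_add_diff_inverse less_imp_le power_add)
      then have "z^(b-a) = 1" using that(2) z0 by simp
      moreover have "1 \<le> b - a" using that(1) by simp
      ultimately show False using nr by blast
    qed
    show "i = j" using *[of i j] *[of j i] e by (cases i j rule: linorder_cases) auto
  qed
  moreover have "z^k + 1 \<in> trace ` G z" for k
    using G_mpow[OF G_gens(1)[of z], of k] tr[of k] by (metis image_eqI)
  ultimately show ?thesis by (rule inj_infinite_sub)
qed

lemma one_infinite: "infinite (trace ` G 1)"
proof -
  have tr: "trace (mpow (Rq 1) k ** Sq 1) = of_nat k" for k unfolding R_pow by (simp add: gens)
  have "inj (\<lambda>k. (of_nat k :: complex))" by (simp add: inj_on_def)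
  moreover have "of_nat k \<in> trace ` G 1" for k
    using G_mult[OF G_mpow[OF G_gens(1)[of 1], of k] G_gens(3)[of 1]] tr[of k] by (metis image_eqI)
  ultimately show ?thesis by (rule inj_infinite_sub)
qed

lemma latt_fin:
  assumes zz: "z * z = of_int p + of_int q * z" and zi: "inverse z = of_int r + of_int r' * z"
    and z0: "z \<noteq> 0" and im: "Im z \<noteq> 0" and bd: "\<And>M. M \<in> Gq \<Longrightarrow> cmod (trace (M z)) \<le> 2"
  shows "finite (trace ` G z)"
proof -
  have "trace ` G z \<subseteq> {t. inZ z t \<and> cmod t \<le> 2}"
    unfolding Gq_at_def using inZ_trace[OF zz zi z0] bd by auto
  then show ?thesis using lattice_finite[OF im] by (rule finite_subset)
qed

lemma two_re: "cmod z = 1 \<Longrightarrow> inverse z = w \<Longrightarrow> 2 * Re z = Re (z + w)"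
  using unit_inv[of z] by auto

lemma im_from_re: "cmod z = 1 \<Longrightarrow> (Re z)^2 < 1 \<Longrightarrow> Im z \<noteq> 0"
  using cmod_power2[of z] by auto

theorem corollary5p2:
  fixes \<zeta> :: complex
  assumes "\<zeta> \<noteq> 0"
  shows "finite (trace ` Gq_at \<zeta>) \<longleftrightarrow>
           (\<exists>n\<in>{2,3,4,5,6::nat}. primitive_root_of_unity n \<zeta>)"
proof
  assume fin: "finite (trace ` Gq_at \<zeta>)"
  have ex: "\<exists>m. 1 \<le> m \<and> \<zeta>^m = 1" using not_root_infinite[OF assms] fin by auto
  define n where "n = (LEAST m. 1 \<le> m \<and> \<zeta>^m = 1)"
  have n: "1 \<le> n" "\<zeta>^n = 1" using LeastI_ex[OF ex] unfolding n_def by auto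
  have nl: "\<zeta>^k \<noteq> 1" if "1 \<le> k" "k < n" for k
    using not_less_Least[of k "\<lambda>m. 1 \<le> m \<and> \<zeta>^m = 1"] that unfolding n_def by auto
  have prim: "primitive_root_of_unity n \<zeta>" unfolding primitive_root_of_unity_def using n nl by auto
  have "n \<noteq> 1"
  proof
    assume "n = 1" then have "\<zeta> = 1" using n by simp
    then show False using fin one_infinite by simp
  qed
  moreover have "\<not> n \<ge> 7" using main_infinite[OF prim] fin by auto
  ultimately have "n \<in> {2,3,4,5,6}" using n(1) by auto
  then show "\<exists>n\<in>{2,3,4,5,6::nat}. primitive_root_of_unity n \<zeta>" using prim by blast
next
  assume "\<exists>n\<in>{2,3,4,5,6::nat}. primitive_root_of_unity n \<zeta>"
  then obtain n where nin: "n \<in> {2,3,4,5,6::nat}" and prim: "primitive_root_of_unity n \<zeta>" by blast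
  note pf = prim_facts[OF prim]
  have z1: "cmod \<zeta> = 1" and z0: "\<zeta> \<noteq> 0" using pf by auto
  consider "n = 2" | "n = 3" | "n = 4" | "n = 5" | "n = 6" using nin by auto
  then show "finite (trace ` Gq_at \<zeta>)"
  proof cases
    case 1
    have "(\<zeta> - 1) * (\<zeta> + 1) = 0" using pf(1) 1 by (simp add: algebra_simps power2_eq_square)
    then have zm: "\<zeta> = -1" using pf(3)[of 1] 1 by (auto simp: add_eq_0_iff2)
    have bd: "cmod (trace (M \<zeta>)) \<le> 2" if "M \<in> Gq" for M
      using unitary_bound[OF z1 _ that] zm by simp
    have "trace ` Gq_at \<zeta> \<subseteq> of_int ` {-2..2}"
    proof
      fix t assume "t \<in> trace ` Gq_at \<zeta>"
      then obtain M where M: "M \<in> Gq" "t = trace (M \<zeta>)" unfolding Gq_at_def by auto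
      obtain a b :: int where ab: "t = of_int a + of_int b * \<zeta>"
        using inZ_trace[of \<zeta> 1 0 "-1" 0, OF _ _ z0 M(1)] M(2) zm unfolding inZ_def by auto
      then have t: "t = of_int (a - b)" using zm by simp
      have "cmod t \<le> 2" using bd M by simp
      then have "\<bar>real_of_int (a - b)\<bar> \<le> 2" unfolding t by (simp only: norm_of_int)
      then have "\<bar>a - b\<bar> \<le> 2" by linarith
      then have "a - b \<in> {-2..2}" by auto
      then show "t \<in> of_int ` {-2..2}" unfolding t by (rule imageI)
    qed
    then show ?thesis by (rule finite_subset) simp
  next
    case 2
    have "(\<zeta> - 1) * (\<zeta>^2 + \<zeta> + 1) = 0" using pf(1) 2 by (simp add: algebra_simps power2_eq_square power3_eq_cube)
    then have q: "\<zeta>^2 + \<zeta> + 1 = 0" using pf(3)[of 1] 2 by auto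
    have "\<zeta> * \<zeta> = -1 - \<zeta>" using q by algebra
    then have zz: "\<zeta> * \<zeta> = of_int (-1) + of_int (-1) * \<zeta>" by simp
    have "\<zeta> * (-1 - \<zeta>) = 1" using q by algebra
    then have "inverse \<zeta> = -1 - \<zeta>" by (rule inverse_unique)
    then have zi: "inverse \<zeta> = of_int (-1) + of_int (-1) * \<zeta>" by simp
    have re: "2 * Re \<zeta> = -1" using two_re[OF z1 zi] by simp
    then have rz: "Re \<zeta> = (2 * Re \<zeta>) / 2" by simp
    then have r2: "(Re \<zeta>)^2 < 1" "Re \<zeta> < 1/2" unfolding re by (simp_all add: power2_eq_square)
    show ?thesis
      by (rule latt_fin[OF zz zi z0 im_from_re[OF z1]]) (use r2 unitary_bound[OF z1] in auto)
  next
    case 3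
    have "(\<zeta>^2 - 1) * (\<zeta>^2 + 1) = 0" using pf(1) 3 by (simp add: algebra_simps power2_eq_square power4_eq_xxxx)
    then have q: "\<zeta>^2 = -1" using pf(3)[of 2] 3 by (auto simp: add_eq_0_iff2)
    have zz: "\<zeta> * \<zeta> = of_int (-1) + of_int 0 * \<zeta>" using q by (simp add: power2_eq_square)
    have "\<zeta> * (- \<zeta>) = 1" using q by algebra
    then have "inverse \<zeta> = - \<zeta>" by (rule inverse_unique)
    then have zi: "inverse \<zeta> = of_int 0 + of_int (-1) * \<zeta>" by simp
    have re: "2 * Re \<zeta> = 0" using two_re[OF z1 zi] by simp
    then have rz: "Re \<zeta> = (2 * Re \<zeta>) / 2" by simp
    then have r2: "(Re \<zeta>)^2 < 1" "Re \<zeta> < 1/2" unfolding re by (simp_all add: power2_eq_square)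
    show ?thesis
      by (rule latt_fin[OF zz zi z0 im_from_re[OF z1]]) (use r2 unitary_bound[OF z1] in auto)
  next
    case 4
    then show ?thesis using five_finite prim by simp
  next
    case 5
    have "(\<zeta>^3 - 1) * (\<zeta> + 1) * (\<zeta>^2 - \<zeta> + 1) = \<zeta>^6 - 1" by algebra
    then have "(\<zeta>^3 - 1) * (\<zeta> + 1) * (\<zeta>^2 - \<zeta> + 1) = 0" using pf(1) 5 by simp
    moreover have "\<zeta>^3 \<noteq> 1" using pf(3)[of 3] 5 by simp
    moreover have "\<zeta> + 1 \<noteq> 0"
    proof
      assume "\<zeta> + 1 = 0" then have "\<zeta> = -1" by (simp add: add_eq_0_iff2)
      then show False using pf(3)[of 2] 5 by simp
    qed
    ultimately have q: "\<zeta>^2 - \<zeta> + 1 = 0" by simp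
    have "\<zeta> * \<zeta> = -1 + \<zeta>" using q by algebra
    then have zz: "\<zeta> * \<zeta> = of_int (-1) + of_int 1 * \<zeta>" by simp
    have "\<zeta> * (1 - \<zeta>) = 1" using q by algebra
    then have "inverse \<zeta> = 1 - \<zeta>" by (rule inverse_unique)
    then have zi: "inverse \<zeta> = of_int 1 + of_int (-1) * \<zeta>" by simp
    have re: "2 * Re \<zeta> = 1" using two_re[OF z1 zi] by simp
    then have rz: "Re \<zeta> = 1/2" by simp
    have r2: "(Re \<zeta>)^2 < 1" "Re \<zeta> \<le> 1/2" unfolding rz by (simp_all add: power2_eq_square)
    show ?thesis
      by (rule latt_fin[OF zz zi z0 im_from_re[OF z1]]) (use r2 six_bound[OF q z1] in auto)
  qed
qed

end
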